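(* Suppose $\dim_{\mathbb{C}}N=n-m=4$, where $N=\mathrm{span}_{\mathbb{C}}\{I_{m+1},\dots,I_n\}$, and suppose the structure constants satisfy $\Upsilon^{m+1}_{m+1,m+2}\Upsilon^{m+2}_{m+2,m+3}=\Upsilon^{m+1}_{m+1,m+2}\Upsilon^{m+2}_{m+2,m+4}=\Upsilon^{m+1}_{m+1,m+3}\Upsilon^{m+2}_{m+3,m+4}=\Upsilon^{m+3}_{m+3,m+4}\Upsilon^{m+1}_{m+1,m+3}=\Upsilon^{m+1}_{m+2,m+3}\Upsilon^{m+1}_{m+3,m+4}=\Upsilon^{m+1}_{m+2,m+3}\Upsilon^{m+2}_{m+3,m+4}=\Upsilon^{m+1}_{m+2,m+3}\Upsilon^{m+3}_{m+3,m+4}=\Upsilon^{m+1}_{m+1,m+2}\Upsilon^{m+1}_{m+2,m+3}\Upsilon^{m+2}_{m+3,m+4}=\Upsilon^{m+1}_{m+1,m+2}\Upsilon^{m+1}_{m+2,m+3}\Upsilon^{m+3}_{m+3,m+4}=\Upsilon^{m+2}_{m+2,m+3}\Upsilon^{m+1}_{m+3,m+4}=\Upsilon^{m+2}_{m+2,m+3}\Upsilon^{m+3}_{m+3,m+4}=\Upsilon^{m+2}_{m+2,m+3}\Upsilon^{m+1}_{m+1,m+2}\Upsilon^{m+1}_{m+3,m+4}=\Upsilon^{m+2}_{m+2,m+3}\Upsilon^{m+1}_{m+1,m+2}\Upsilon^{m+2}_{m+3,m+4}=\Upsilon^{m+2}_{m+2,m+3}\Upsilon^{m+1}_{m+1,m+2}\Upsilon^{m+3}_{m+3,m+4}=0.$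 Then for every circle $C$ as described in the context, $\lambda:=\int_C\zeta^{-1}\,d\zeta=2\pi i$ (that is, $2\pi i$ times the unit of $\mathbb{A}_n^m$).
   Context: Fix natural numbers $m\le n$. $\mathbb{A}_n^m$ is a commutative associative algebra with unit over $\mathbb{C}$ with a basis $\{I_k\}_{k=1}^n$ satisfying: (1) for $r,s\in\{1,\dots,m\}$, $I_rI_s=0$ if $r\ne s$ and $I_rI_r=I_r$; (2) for $r,s\in\{m+1,\dots,n\}$, $I_rI_s=\sum_{k=\max\{r,s\}+1}^{n}\Upsilon^{s}_{r,k}I_k$ with constants $\Upsilon^s_{r,k}\in\mathbb{C}$ (so $\Upsilon^s_{r,k}$ is the coefficient of $I_k$ in $I_rI_s$); (3) for each $s\in\{m+1,\dots,n\}$ there is a unique $u_s\in\{1,\dots,m\}$ such that for $r\in\{1,\dots,m\}$, $I_rI_s=I_s$ if $r=u_s$ and $0$ otherwise. Unit $1=\sum_{u=1}^mI_u$; $\mathbb{A}_n^m=S\oplus_sN$ with $S=\mathrm{span}\{I_1,\dots,I_m\}$, $N=\mathrm{span}\{I_{m+1},\dots,I_n\}$. $f_u(\sum_k\lambda_kI_k)=\lambda_u$. Let $e_1=1$, $e_2=\sum_ka_kI_k$, $e_3=\sum_kb_kI_k$ ($a_k,b_k\in\mathbb{C}$) be linearly independent over $\mathbb{R}$; $\zeta=xe_1+ye_2+ze_3$ ($x,y,z\in\mathbb{R}$), $E_3$ their real span. Standing assumption: $f_u(E_3)=\mathbb{C}$ for all $u=1,\dots,m$. $\zeta$ is non-invertible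 exactly when $(x,y,z)$ lies on one of the lines $L_u=\{x+y\,\mathrm{Re}\,a_u+z\,\mathrm{Re}\,b_u=0,\ y\,\mathrm{Im}\,a_u+z\,\mathrm{Im}\,b_u=0\}$. The circle: $C\subset E_3$ is $C=\{xe_1+ye_2+ze_3:(x,y,z)\in C'\}$ for a Euclidean circle $C'\subset\mathbb{R}^3$ of radius $R>0$ centered at the origin, such that for every $u$ the image $f_u(C)$ is a positively oriented closed Jordan curve in $\mathbb{C}$ bounding a domain containing $0$. Integral: for a Jordan rectifiable curve $\gamma$ and continuous $\Psi=\sum_k(U_k+iV_k)I_k$ on $\gamma_\zeta$, $\int_{\gamma_\zeta}\Psi d\zeta:=\sum_kI_k\int_\gamma(U_k+iV_k)dx+\sum_ke_2I_k\int_\gamma(U_k+iV_k)dy+\sum_ke_3I_k\int_\gamma(U_k+iV_k)dz$. *)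

theory Defs
  imports "HOL-Complex_Analysis.Complex_Analysis"
begin

text \<open>Elements of the algebra A_n^m are coefficient functions x :: nat => complex,
  x k being the coefficient of the basis vector I_k (k in {1..n}); coefficients outside
  {1..n} are zero.  Ups s r k is the structure constant Upsilon^s_{r,k}, i.e. the
  coefficient of I_k in I_r I_s; u s is the index u_s of rule (3).\<close>

definition alg_elems :: "nat \<Rightarrow> (nat \<Rightarrow> complex) set" where
  "alg_elems n = {x. \<forall>k. k \<notin> {1..n} \<longrightarrow> x k = 0}"

definition basis_el :: "nat \<Rightarrow> nat \<Rightarrow> complex" where
  "basis_el i = (\<lambda>k. if k = i then 1 else 0)"

definition tbl :: "nat \<Rightarrow> nat \<Rightarrow> (nat \<Rightarrow> nat \<Rightarrow> nat \<Rightarrow> complex) \<Rightarrow> (nat \<Rightarrow> nat)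
    \<Rightarrow> nat \<Rightarrow> nat \<Rightarrow> nat \<Rightarrow> complex" where
  "tbl m n Ups u r s k =
     (if r \<le> m \<and> s \<le> m then (if r = s \<and> k = r then 1 else 0)
      else if r \<le> m then (if r = u s \<and> k = s then 1 else 0)
      else if s \<le> m then (if s = u r \<and> k = r then 1 else 0)
      else (if max r s < k \<and> k \<le> n then Ups s r k else 0))"

definition amul :: "nat \<Rightarrow> nat \<Rightarrow> (nat \<Rightarrow> nat \<Rightarrow> nat \<Rightarrow> complex) \<Rightarrow> (nat \<Rightarrow> nat)
    \<Rightarrow> (nat \<Rightarrow> complex) \<Rightarrow> (nat \<Rightarrow> complex) \<Rightarrow> (nat \<Rightarrow> complex)" where
  "amul m n Ups u x y = (\<lambda>k. if k \<in> {1..n} then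
      (\<Sum>r\<in>{1..n}. \<Sum>s\<in>{1..n}. x r * y s * tbl m n Ups u r s k) else 0)"

definition aone :: "nat \<Rightarrow> nat \<Rightarrow> complex" where
  "aone m = (\<lambda>k. if 1 \<le> k \<and> k \<le> m then 1 else 0)"

definition ainv :: "nat \<Rightarrow> nat \<Rightarrow> (nat \<Rightarrow> nat \<Rightarrow> nat \<Rightarrow> complex) \<Rightarrow> (nat \<Rightarrow> nat)
    \<Rightarrow> (nat \<Rightarrow> complex) \<Rightarrow> (nat \<Rightarrow> complex)" where
  "ainv m n Ups u x = (THE y. y \<in> alg_elems n \<and> amul m n Ups u x y = aone m)"

definition is_algebra_Anm :: "nat \<Rightarrow> nat \<Rightarrow> (nat \<Rightarrow> nat \<Rightarrow> nat \<Rightarrow> complex) \<Rightarrow> (nat \<Rightarrow> nat) \<Rightarrow> bool" where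
  "is_algebra_Anm m n Ups u \<longleftrightarrow>
     1 \<le> m \<and> m \<le> n \<and>
     (\<forall>s\<in>{m+1..n}. u s \<in> {1..m}) \<and>
     (\<forall>r\<in>{1..n}. \<forall>s\<in>{1..n}. \<forall>k. tbl m n Ups u r s k = tbl m n Ups u s r k) \<and>
     (\<forall>i\<in>{1..n}. \<forall>j\<in>{1..n}. \<forall>l\<in>{1..n}.
        amul m n Ups u (amul m n Ups u (basis_el i) (basis_el j)) (basis_el l)
      = amul m n Ups u (basis_el i) (amul m n Ups u (basis_el j) (basis_el l)))"

definition coeffs_el :: "nat \<Rightarrow> (nat \<Rightarrow> complex) \<Rightarrow> nat \<Rightarrow> complex" where
  "coeffs_el n a = (\<lambda>k. if k \<in> {1..n} then a k else 0)"

text \<open>zeta = x e_1 + y e_2 + z e_3 for P = (x,y,z).\<close>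
definition zeta :: "nat \<Rightarrow> (nat \<Rightarrow> complex) \<Rightarrow> (nat \<Rightarrow> complex) \<Rightarrow> real^3 \<Rightarrow> nat \<Rightarrow> complex" where
  "zeta m e2 e3 P = (\<lambda>k. of_real (P$1) * aone m k + of_real (P$2) * e2 k + of_real (P$3) * e3 k)"

definition circ :: "real \<Rightarrow> real^3 \<Rightarrow> real^3 \<Rightarrow> real \<Rightarrow> real^3" where
  "circ R p q t = R *\<^sub>R (cos (2*pi*t) *\<^sub>R p + sin (2*pi*t) *\<^sub>R q)"

definition coord_int :: "(real \<Rightarrow> real^3) \<Rightarrow> (real^3 \<Rightarrow> complex) \<Rightarrow> 3 \<Rightarrow> complex" where
  "coord_int \<gamma> g j = integral {0..1} (\<lambda>t. g (\<gamma> t) * of_real (vector_derivative \<gamma> (at t) $ j))"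

definition alg_int :: "nat \<Rightarrow> nat \<Rightarrow> (nat \<Rightarrow> nat \<Rightarrow> nat \<Rightarrow> complex) \<Rightarrow> (nat \<Rightarrow> nat)
   \<Rightarrow> (nat \<Rightarrow> complex) \<Rightarrow> (nat \<Rightarrow> complex) \<Rightarrow> (real \<Rightarrow> real^3) \<Rightarrow> (real^3 \<Rightarrow> nat \<Rightarrow> complex)
   \<Rightarrow> nat \<Rightarrow> complex" where
  "alg_int m n Ups u e2 e3 \<gamma> \<Psi> =
     (let V = (\<lambda>j k. if k \<in> {1..n} then coord_int \<gamma> (\<lambda>P. \<Psi> P k) j else 0)
      in (\<lambda>k. V 1 k + amul m n Ups u e2 (V 2) k + amul m n Ups u e3 (V 3) k))"

end

theory Submission
  imports Defs "HOL-Library.Function_Algebras"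
begin


lemma perm4: "(\<Sum>a\<in>A. \<Sum>b\<in>B. \<Sum>c\<in>C. \<Sum>d\<in>D. f a b c d) = (\<Sum>c\<in>C. \<Sum>d\<in>D. \<Sum>b\<in>B. \<Sum>a\<in>A. f a b c d)"
proof -
  have "(\<Sum>a\<in>A. \<Sum>b\<in>B. \<Sum>c\<in>C. \<Sum>d\<in>D. f a b c d) = (\<Sum>b\<in>B. \<Sum>a\<in>A. \<Sum>c\<in>C. \<Sum>d\<in>D. f a b c d)"
    by (rule sum.swap)
  also have "\<dots> = (\<Sum>b\<in>B. \<Sum>c\<in>C. \<Sum>a\<in>A. \<Sum>d\<in>D. f a b c d)"
    by (rule sum.cong[OF refl], rule sum.swap)
  also have "\<dots> = (\<Sum>c\<in>C. \<Sum>b\<in>B. \<Sum>a\<in>A. \<Sum>d\<in>D. f a b c d)"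
    by (rule sum.swap)
  also have "\<dots> = (\<Sum>c\<in>C. \<Sum>b\<in>B. \<Sum>d\<in>D. \<Sum>a\<in>A. f a b c d)"
    by (intro sum.cong[OF refl], rule sum.swap)
  also have "\<dots> = (\<Sum>c\<in>C. \<Sum>d\<in>D. \<Sum>b\<in>B. \<Sum>a\<in>A. f a b c d)"
    by (intro sum.cong[OF refl], rule sum.swap)
  finally show ?thesis .
qed
lemma perm3: "(\<Sum>a\<in>A. \<Sum>b\<in>B. \<Sum>c\<in>C. f a b c) = (\<Sum>b\<in>B. \<Sum>c\<in>C. \<Sum>a\<in>A. f a b c)"
proof -
  have "(\<Sum>a\<in>A. \<Sum>b\<in>B. \<Sum>c\<in>C. f a b c) = (\<Sum>b\<in>B. \<Sum>a\<in>A. \<Sum>c\<in>C. f a b c)"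
    by (rule sum.swap)
  also have "\<dots> = (\<Sum>b\<in>B. \<Sum>c\<in>C. \<Sum>a\<in>A. f a b c)"
    by (rule sum.cong[OF refl], rule sum.swap)
  finally show ?thesis .
qed

locale AA =
  fixes m n :: nat and Ups :: "nat \<Rightarrow> nat \<Rightarrow> nat \<Rightarrow> complex" and u :: "nat \<Rightarrow> nat"
  assumes alg: "is_algebra_Anm m n Ups u"
begin

abbreviation "T \<equiv> tbl m n Ups u"
abbreviation "mul \<equiv> amul m n Ups u"
abbreviation "E \<equiv> alg_elems n"
abbreviation "one \<equiv> aone m"

lemma m_pos: "1 \<le> m" and m_le: "m \<le> n" and u_in: "\<And>s. s \<in> {m+1..n} \<Longrightarrow> u s \<in> {1..m}"
  using alg unfolding is_algebra_Anm_def by auto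

lemma T_sym: "r \<in> {1..n} \<Longrightarrow> s \<in> {1..n} \<Longrightarrow> T r s k = T s r k"
  using alg unfolding is_algebra_Anm_def by blast

lemma mul_eq: "mul x y k = (if k \<in> {1..n} then (\<Sum>r\<in>{1..n}. \<Sum>s\<in>{1..n}. x r * y s * T r s k) else 0)"
  unfolding amul_def by (rule refl)

lemma mul_in: "mul x y \<in> E"
  unfolding alg_elems_def amul_def by auto

lemma mul_out: "k \<notin> {1..n} \<Longrightarrow> mul x y k = 0"
  unfolding amul_def by auto

lemma mul_comm: "mul x y = mul y x"
proof
  fix k
  have "(\<Sum>r\<in>{1..n}. \<Sum>s\<in>{1..n}. x r * y s * T r s k) = (\<Sum>r\<in>{1..n}. \<Sum>s\<in>{1..n}. y s * x r * T s r k)"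
    by (intro sum.cong refl) (simp add: T_sym mult.commute)
  also have "\<dots> = (\<Sum>s\<in>{1..n}. \<Sum>r\<in>{1..n}. y s * x r * T s r k)"
    by (rule sum.swap)
  finally show "mul x y k = mul y x k" by (simp add: mul_eq)
qed

lemma sum_basis: "i \<in> S \<Longrightarrow> finite S \<Longrightarrow> (\<Sum>r\<in>S. basis_el i r * g r) = g i"
proof -
  assume "i \<in> S" "finite S"
  have "(\<Sum>r\<in>S. basis_el i r * g r) = (\<Sum>r\<in>S. if r = i then g r else 0)"
    by (intro sum.cong refl) (simp add: basis_el_def)
  also have "\<dots> = g i" using \<open>i \<in> S\<close> \<open>finite S\<close> by (simp add: sum.delta)
  finally show ?thesis .
qed

lemma mul_basis_left: "i \<in> {1..n} \<Longrightarrow> t \<in> {1..n} \<Longrightarrow> mul (basis_el i) y t = (\<Sum>s\<in>{1..n}. y s * T i s t)"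
proof -
  assume i: "i \<in> {1..n}" and t: "t \<in> {1..n}"
  have "mul (basis_el i) y t = (\<Sum>r\<in>{1..n}. basis_el i r * (\<Sum>s\<in>{1..n}. y s * T r s t))"
    using t by (simp add: mul_eq sum_distrib_left mult.assoc)
  also have "\<dots> = (\<Sum>s\<in>{1..n}. y s * T i s t)" using i by (rule sum_basis) simp
  finally show ?thesis .
qed

lemma mul_basis_right: "j \<in> {1..n} \<Longrightarrow> t \<in> {1..n} \<Longrightarrow> mul x (basis_el j) t = (\<Sum>r\<in>{1..n}. x r * T r j t)"
  using mul_basis_left[of j t x] by (simp add: mul_comm T_sym)

lemma basis_basis: "i \<in> {1..n} \<Longrightarrow> j \<in> {1..n} \<Longrightarrow> t \<in> {1..n} \<Longrightarrow> mul (basis_el i) (basis_el j) t = T i j t"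
proof -
  assume a: "i \<in> {1..n}" "j \<in> {1..n}" "t \<in> {1..n}"
  have "mul (basis_el i) (basis_el j) t = (\<Sum>s\<in>{1..n}. basis_el j s * T i s t)"
    using a by (simp add: mul_basis_left)
  also have "\<dots> = T i j t" using a(2) by (rule sum_basis) simp
  finally show ?thesis .
qed

lemma basis_assoc:
  assumes "i \<in> {1..n}" "j \<in> {1..n}" "l \<in> {1..n}" "k \<in> {1..n}"
  shows "(\<Sum>t\<in>{1..n}. T i j t * T t l k) = (\<Sum>t\<in>{1..n}. T j l t * T i t k)"
proof -
  have "mul (mul (basis_el i) (basis_el j)) (basis_el l) k = mul (basis_el i) (mul (basis_el j) (basis_el l)) k"
    using alg assms unfolding is_algebra_Anm_def by metis
  moreover have "mul (mul (basis_el i) (basis_el j)) (basis_el l) k = (\<Sum>t\<in>{1..n}. T i j t * T t l k)"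
  proof -
    have "mul (mul (basis_el i) (basis_el j)) (basis_el l) k = (\<Sum>r\<in>{1..n}. mul (basis_el i) (basis_el j) r * T r l k)"
      using assms by (simp add: mul_basis_right)
    also have "\<dots> = (\<Sum>t\<in>{1..n}. T i j t * T t l k)"
      using assms by (intro sum.cong refl) (simp add: basis_basis)
    finally show ?thesis .
  qed
  moreover have "mul (basis_el i) (mul (basis_el j) (basis_el l)) k = (\<Sum>t\<in>{1..n}. T j l t * T i t k)"
  proof -
    have "mul (basis_el i) (mul (basis_el j) (basis_el l)) k = (\<Sum>r\<in>{1..n}. mul (basis_el j) (basis_el l) r * T i r k)"
      using assms by (simp add: mul_basis_left)
    also have "\<dots> = (\<Sum>t\<in>{1..n}. T j l t * T i t k)"
      using assms by (intro sum.cong refl) (simp add: basis_basis)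
    finally show ?thesis .
  qed
  ultimately show ?thesis by simp
qed

lemma mul_assoc: "mul (mul x y) z = mul x (mul y z)"
proof
  fix k
  let ?I = "{1..n}"
  show "mul (mul x y) z k = mul x (mul y z) k"
  proof (cases "k \<in> ?I")
    case False then show ?thesis by (simp add: mul_out)
  next
    case k: True
    have "mul (mul x y) z k = (\<Sum>t\<in>?I. \<Sum>l\<in>?I. (\<Sum>r\<in>?I. \<Sum>s\<in>?I. x r * y s * T r s t) * z l * T t l k)"
    proof -
      have "mul (mul x y) z k = (\<Sum>t\<in>?I. \<Sum>l\<in>?I. mul x y t * z l * T t l k)"
        using k by (simp only: mul_eq[of "mul x y" z] if_True)
      also have "\<dots> = (\<Sum>t\<in>?I. \<Sum>l\<in>?I. (\<Sum>r\<in>?I. \<Sum>s\<in>?I. x r * y s * T r s t) * z l * T t l k)"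
        by (intro sum.cong refl) (simp add: mul_eq[of x y])
      finally show ?thesis .
    qed
    also have "\<dots> = (\<Sum>t\<in>?I. \<Sum>l\<in>?I. \<Sum>r\<in>?I. \<Sum>s\<in>?I. x r * y s * z l * (T r s t * T t l k))"
      by (simp only: sum_distrib_right) (simp add: mult_ac)
    also have "\<dots> = (\<Sum>r\<in>?I. \<Sum>s\<in>?I. \<Sum>l\<in>?I. \<Sum>t\<in>?I. x r * y s * z l * (T r s t * T t l k))"
      by (rule perm4)
    also have "\<dots> = (\<Sum>r\<in>?I. \<Sum>s\<in>?I. \<Sum>l\<in>?I. x r * y s * z l * (\<Sum>t\<in>?I. T r s t * T t l k))"
      by (simp add: sum_distrib_left)
    also have "\<dots> = (\<Sum>r\<in>?I. \<Sum>s\<in>?I. \<Sum>l\<in>?I. x r * y s * z l * (\<Sum>t\<in>?I. T s l t * T r t k))"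
      using k by (intro sum.cong refl arg_cong2[where f="(*)"] basis_assoc) auto
    also have "\<dots> = (\<Sum>r\<in>?I. \<Sum>s\<in>?I. \<Sum>l\<in>?I. \<Sum>t\<in>?I. x r * y s * z l * (T s l t * T r t k))"
      by (simp add: sum_distrib_left)
    also have "\<dots> = (\<Sum>r\<in>?I. \<Sum>t\<in>?I. \<Sum>s\<in>?I. \<Sum>l\<in>?I. x r * y s * z l * (T s l t * T r t k))"
      by (rule sum.cong[OF refl]) (rule perm3[symmetric])
    also have "\<dots> = (\<Sum>r\<in>?I. \<Sum>t\<in>?I. x r * (\<Sum>s\<in>?I. \<Sum>l\<in>?I. y s * z l * T s l t) * T r t k)"
      by (simp only: sum_distrib_left sum_distrib_right) (simp add: mult_ac)
    also have "\<dots> = mul x (mul y z) k"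
    proof -
      have "mul x (mul y z) k = (\<Sum>r\<in>?I. \<Sum>t\<in>?I. x r * mul y z t * T r t k)"
        using k by (simp only: mul_eq[of x "mul y z"] if_True)
      also have "\<dots> = (\<Sum>r\<in>?I. \<Sum>t\<in>?I. x r * (\<Sum>s\<in>?I. \<Sum>l\<in>?I. y s * z l * T s l t) * T r t k)"
        by (intro sum.cong refl) (simp add: mul_eq[of y z])
      finally show ?thesis by simp
    qed
    finally show ?thesis .
  qed
qed

lemma mul_left_comm: "mul x (mul y z) = mul y (mul x z)"
  by (metis mul_assoc mul_comm)

lemmas mul_ac = mul_assoc mul_comm mul_left_comm


lemma mul_add_left: "mul (x + y) z = mul x z + mul y z"
  by (rule ext) (simp add: mul_eq sum.distrib algebra_simps)

lemma mul_add_right: "mul z (x + y) = mul z x + mul z y"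
  by (simp add: mul_comm[of z] mul_add_left)

lemma mul_minus_left: "mul (- x) z = - mul x z"
  by (rule ext) (simp add: mul_eq sum_negf)

lemma mul_minus_right: "mul z (- x) = - mul z x"
  by (simp add: mul_comm[of z] mul_minus_left)

lemma mul_diff_left: "mul (x - y) z = mul x z - mul y z"
  using mul_add_left[of x "- y" z] by (simp add: mul_minus_left)

lemma mul_diff_right: "mul z (x - y) = mul z x - mul z y"
  by (simp add: mul_comm[of z] mul_diff_left)

lemma mul_zero_left: "mul 0 z = 0"
  by (rule ext) (simp add: mul_eq)

lemma mul_zero_right: "mul z 0 = 0"
  by (simp add: mul_comm[of z] mul_zero_left)

definition sc :: "complex \<Rightarrow> (nat \<Rightarrow> complex) \<Rightarrow> nat \<Rightarrow> complex" where
  "sc c x = (\<lambda>k. c * x k)"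

lemma mul_sc_left: "mul (sc c x) z = sc c (mul x z)"
  by (rule ext) (simp add: mul_eq sc_def sum_distrib_left mult_ac)

lemma mul_sc_right: "mul z (sc c x) = sc c (mul z x)"
  by (simp add: mul_comm[of z] mul_sc_left)

lemma sum_one: "(\<Sum>r\<in>{1..n}. one r * g r) = (\<Sum>r\<in>{1..m}. g r)"
proof -
  have "(\<Sum>r\<in>{1..n}. one r * g r) = (\<Sum>r\<in>{1..n}. if r \<le> m then g r else 0)"
    by (intro sum.cong refl) (auto simp: aone_def)
  also have "\<dots> = sum g {r\<in>{1..n}. r \<le> m}" by (rule sum.inter_filter[symmetric]) simp
  also have "{r\<in>{1..n}. r \<le> m} = {1..m}" using m_le by auto
  finally show ?thesis .
qed

lemma one_col: assumes s: "s \<in> {1..n}" and k: "k \<in> {1..n}"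
  shows "(\<Sum>r\<in>{1..m}. T r s k) = (if k = s then 1 else 0)"
proof (cases "s \<le> m")
  case True
  have "(\<Sum>r\<in>{1..m}. T r s k) = (\<Sum>r\<in>{1..m}. if r = s then (if k = s then 1 else 0) else 0)"
    using True by (intro sum.cong refl) (auto simp: tbl_def)
  also have "\<dots> = (if k = s then 1 else 0)" using True s by (simp add: sum.delta)
  finally show ?thesis .
next
  case False
  have us: "u s \<in> {1..m}" using u_in[of s] s False by auto
  have "(\<Sum>r\<in>{1..m}. T r s k) = (\<Sum>r\<in>{1..m}. if r = u s then (if k = s then 1 else 0) else 0)"
    using False by (intro sum.cong refl) (auto simp: tbl_def)
  also have "\<dots> = (if k = s then 1 else 0)" using us by (simp add: sum.delta)
  finally show ?thesis .
qed

lemma col: "s \<in> {1..n} \<Longrightarrow> k \<in> {1..n} \<Longrightarrow> (\<Sum>r\<in>{1..n}. one r * T r s k) = (if k = s then 1 else 0)"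
  by (simp only: sum_one one_col)

lemma mul_one_left: "mul one x k = (if k \<in> {1..n} then x k else 0)"
proof (cases "k \<in> {1..n}")
  case k: True
  have "mul one x k = (\<Sum>s\<in>{1..n}. x s * (\<Sum>r\<in>{1..n}. one r * T r s k))"
    using k by (simp add: mul_eq sum_distrib_left mult_ac) (rule sum.swap)
  also have "\<dots> = (\<Sum>s\<in>{1..n}. x s * (if k = s then 1 else 0))"
    using k by (intro sum.cong refl, subst col) auto
  also have "\<dots> = x k" using k by (simp add: if_distrib[of "\<lambda>z. _ * z"] sum.delta cong: if_cong)
  finally show ?thesis using k by simp
qed (auto simp: mul_out)

lemma E_iff: "x \<in> E \<longleftrightarrow> (\<forall>k. k \<notin> {1..n} \<longrightarrow> x k = 0)"
  by (simp add: alg_elems_def)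

lemma mul_one: "x \<in> E \<Longrightarrow> mul one x = x"
  by (rule ext) (auto simp: mul_one_left E_iff)

lemma mul_one_right: "x \<in> E \<Longrightarrow> mul x one = x"
  by (simp add: mul_comm[of x] mul_one)

lemma one_in: "one \<in> E"
  using m_le by (auto simp: E_iff aone_def)


definition inS :: "(nat \<Rightarrow> complex) \<Rightarrow> bool" where
  "inS x \<longleftrightarrow> (\<forall>k. x k \<noteq> 0 \<longrightarrow> k \<in> {1..m})"
definition inN :: "nat \<Rightarrow> (nat \<Rightarrow> complex) \<Rightarrow> bool" where
  "inN i x \<longleftrightarrow> (\<forall>k. x k \<noteq> 0 \<longrightarrow> k \<in> {i..n})"

lemma inS_E: "inS x \<Longrightarrow> x \<in> E"
  using m_le by (auto simp: inS_def E_iff)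

lemma inN_E: "inN i x \<Longrightarrow> 1 \<le> i \<Longrightarrow> x \<in> E"
  by (force simp: inN_def E_iff)

lemma mul_zeroI: "(\<And>r s. r \<in> {1..n} \<Longrightarrow> s \<in> {1..n} \<Longrightarrow> x r \<noteq> 0 \<Longrightarrow> y s \<noteq> 0 \<Longrightarrow> T r s k = 0) \<Longrightarrow> mul x y k = 0"
proof -
  assume H: "\<And>r s. r \<in> {1..n} \<Longrightarrow> s \<in> {1..n} \<Longrightarrow> x r \<noteq> 0 \<Longrightarrow> y s \<noteq> 0 \<Longrightarrow> T r s k = 0"
  have "\<forall>r\<in>{1..n}. \<forall>s\<in>{1..n}. x r * y s * T r s k = 0" using H by fastforce
  then show ?thesis by (auto simp: mul_eq intro!: sum.neutral)
qed

lemma mul_SS: assumes x: "inS x" and y: "inS y" shows "mul x y = (\<lambda>k. x k * y k)"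
proof
  fix k
  show "mul x y k = x k * y k"
  proof (cases "k \<in> {1..n}")
    case False
    then have "x k = 0" using x m_le unfolding inS_def by force
    then show ?thesis using False by (simp add: mul_out)
  next
    case k: True
    have "mul x y k = (\<Sum>r\<in>{1..n}. \<Sum>s\<in>{1..n}. if r = k then (if s = k then x k * y k else 0) else 0)"
      unfolding mul_eq using k
    proof (simp only: if_True, intro sum.cong refl)
      fix r s assume r: "r \<in> {1..n}" and s: "s \<in> {1..n}"
      show "x r * y s * T r s k = (if r = k then (if s = k then x k * y k else 0) else 0)"
      proof (cases "x r = 0 \<or> y s = 0")
        case True then show ?thesis by auto
      next
        case False
        then have "r \<le> m" "s \<le> m" using x y unfolding inS_def by auto
        then show ?thesis by (auto simp: tbl_def)
      qed
    qed
    also have "\<dots> = (\<Sum>r\<in>{1..n}. if r = k then (\<Sum>s\<in>{1..n}. if s = k then x k * y k else 0) else 0)"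
      by (intro sum.cong refl) simp
    also have "\<dots> = x k * y k" using k by (simp only: sum.delta finite_atLeastAtMost if_True)
    finally show ?thesis .
  qed
qed

lemma inS_mulS: "inS x \<Longrightarrow> inS y \<Longrightarrow> inS (mul x y)"
  by (simp add: mul_SS inS_def)

lemma mul_SN: assumes x: "inS x" and y: "inN i y" and i: "m < i" shows "inN i (mul x y)"
  unfolding inN_def
proof (intro allI impI)
  fix k assume nz: "mul x y k \<noteq> 0"
  then have k: "k \<in> {1..n}" using mul_out by blast
  have "i \<le> k"
  proof (rule ccontr)
    assume "\<not> i \<le> k"
    then have "mul x y k = 0"
    proof (intro mul_zeroI)
      fix r s assume "x r \<noteq> 0" "y s \<noteq> 0" "\<not> i \<le> k"
      then have "r \<le> m" "i \<le> s" using x y unfolding inS_def inN_def by auto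
      then show "T r s k = 0" using i \<open>\<not> i \<le> k\<close> by (auto simp: tbl_def)
    qed
    with nz show False by simp
  qed
  then show "k \<in> {i..n}" using k by auto
qed

lemma mul_NN: assumes x: "inN (Suc m) x" and y: "inN i y" and i: "m < i" shows "inN (Suc i) (mul x y)"
  unfolding inN_def
proof (intro allI impI)
  fix k assume nz: "mul x y k \<noteq> 0"
  then have k: "k \<in> {1..n}" using mul_out by blast
  have "Suc i \<le> k"
  proof (rule ccontr)
    assume "\<not> Suc i \<le> k"
    then have "mul x y k = 0"
    proof (intro mul_zeroI)
      fix r s assume "x r \<noteq> 0" "y s \<noteq> 0" "\<not> Suc i \<le> k"
      then have "Suc m \<le> r" "i \<le> s" using x y unfolding inN_def by auto
      then show "T r s k = 0" using i \<open>\<not> Suc i \<le> k\<close> by (auto simp: tbl_def)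
    qed
    with nz show False by simp
  qed
  then show "k \<in> {Suc i..n}" using k by auto
qed

primrec pw :: "(nat \<Rightarrow> complex) \<Rightarrow> nat \<Rightarrow> nat \<Rightarrow> complex" where
  "pw x 0 = one"
| "pw x (Suc j) = mul x (pw x j)"

lemma pw_in: "pw x j \<in> E"
  by (cases j) (simp_all add: one_in mul_in)

lemma pw_nil: assumes x: "inN (Suc m) x" shows "j \<ge> 1 \<Longrightarrow> inN (m + j) (pw x j)"
proof (induction j)
  case 0 then show ?case by simp
next
  case (Suc j)
  show ?case
  proof (cases "j = 0")
    case True
    then show ?thesis using x inN_E[OF x] by (simp add: mul_one_right)
  next
    case False
    then have "inN (m + j) (pw x j)" using Suc by simp
    from mul_NN[OF x this] False show ?thesis by simp
  qed
qed

lemma pw5: assumes x: "inN (Suc m) x" and n4: "n = m + 4" shows "pw x 5 = 0"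
proof
  fix k
  have "inN (m + 5) (pw x 5)" using pw_nil[OF x, of 5] by simp
  then show "pw x 5 k = (0 :: nat \<Rightarrow> complex) k" using n4 unfolding inN_def by fastforce
qed

lemma inv_unique: assumes "y \<in> E" "y' \<in> E" "mul z y = one" "mul z y' = one" shows "y = y'"
proof -
  have "y = mul (mul z y') y" using assms by (simp add: mul_one)
  also have "\<dots> = mul y' (mul z y)" by (simp add: mul_ac)
  also have "\<dots> = y'" using assms by (simp add: mul_one_right)
  finally show ?thesis .
qed

lemma ainv_eq: assumes "y \<in> E" "mul z y = one" shows "ainv m n Ups u z = y"
  unfolding ainv_def
proof (rule the_equality)
  show "y \<in> E \<and> mul z y = one" using assms by simp
  fix y' assume "y' \<in> E \<and> mul z y' = one"
  then show "y' = y" using inv_unique assms by blast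
qed


lemma add_E: "x \<in> E \<Longrightarrow> y \<in> E \<Longrightarrow> x + y \<in> E"
  and diff_E: "x \<in> E \<Longrightarrow> y \<in> E \<Longrightarrow> x - y \<in> E"
  and minus_E: "x \<in> E \<Longrightarrow> - x \<in> E"
  by (auto simp: E_iff)

lemma pw1: "x \<in> E \<Longrightarrow> pw x 1 = x"
  by (simp add: mul_one_right)
lemma pw2: "mul x (pw x 1) = pw x 2" and pw3: "mul x (pw x 2) = pw x 3"
  and pw4: "mul x (pw x 3) = pw x 4" and pw5': "mul x (pw x 4) = pw x 5"
  by (simp_all add: eval_nat_numeral)

lemma key_identity:
  assumes n4: "n = m + 4"
    and D: "inS D" and Di: "inS Dinv" and Dp: "inS Dp" and nu: "inN (Suc m) nu" and nup: "inN (Suc m) nup"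
    and DDi: "mul D Dinv = one"
  defines "W \<equiv> mul Dinv nu"
  defines "Wp \<equiv> mul (- mul (mul Dinv Dinv) Dp) nu + mul Dinv nup"
  defines "P \<equiv> one - W + pw W 2 - pw W 3 + pw W 4"
  shows "ainv m n Ups u (D + nu) = mul Dinv P"
    and "mul (ainv m n Ups u (D + nu)) (Dp + nup) = mul Dinv Dp +
           (mul (pw W 0) Wp - mul (pw W 1) Wp + mul (pw W 2) Wp - mul (pw W 3) Wp + mul (pw W 4) Wp)"
proof -
  have DE: "D \<in> E" and DiE: "Dinv \<in> E" and DpE: "Dp \<in> E" using D Di Dp inS_E by auto
  have nuE: "nu \<in> E" and nupE: "nup \<in> E" using nu nup inN_E by auto
  have WN: "inN (Suc m) W" unfolding W_def by (rule mul_SN[OF Di nu]) simp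
  have WE: "W \<in> E" using inN_E[OF WN] by simp
  have nu_eq: "nu = mul D W"
  proof -
    have "mul D W = mul (mul D Dinv) nu" unfolding W_def by (simp only: mul_ac)
    also have "\<dots> = nu" using DDi nuE by (simp add: mul_one)
    finally show ?thesis by simp
  qed
  have PE: "P \<in> E" unfolding P_def by (intro add_E diff_E one_in pw_in WE)
  have W5: "pw W 5 = 0" by (rule pw5[OF WN n4])
  have oWP: "mul (one + W) P = one"
  proof -
    have "mul (one + W) P = P + mul W P" using PE by (simp add: mul_add_left mul_one)
    also have "mul W P = W - pw W 2 + pw W 3 - pw W 4 + pw W 5"
    proof -
      have e1: "mul W one = W" using WE by (rule mul_one_right)
      have e2: "mul W W = pw W 2" using pw2[of W] pw1[OF WE] by simp
      show ?thesis unfolding P_def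
        by (simp only: mul_add_right mul_diff_right e1 e2 pw3 pw4 pw5')
    qed
    also have "P + (W - pw W 2 + pw W 3 - pw W 4 + pw W 5) = one"
      unfolding P_def W5 by (simp add: fun_eq_iff)
    finally show ?thesis .
  qed
  have Z_eq: "D + nu = mul D (one + W)"
    using DE by (simp add: mul_add_right mul_one_right nu_eq)
  have inv: "mul (D + nu) (mul Dinv P) = one"
  proof -
    have "mul (D + nu) (mul Dinv P) = mul (mul D Dinv) (mul (one + W) P)"
      unfolding Z_eq by (simp only: mul_ac)
    also have "\<dots> = one" using DDi oWP one_in by (simp add: mul_one)
    finally show ?thesis .
  qed
  show A: "ainv m n Ups u (D + nu) = mul Dinv P"
    by (rule ainv_eq[OF mul_in inv])
  have "mul D Wp = - mul (mul (mul D Dinv) Dinv) (mul Dp nu) + mul (mul D Dinv) nup"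
    unfolding Wp_def by (simp add: mul_add_right mul_minus_left mul_minus_right mul_diff_right mul_diff_left mul_ac)
  also have "\<dots> = - mul Dp W + nup"
    using DDi nupE nuE by (simp add: mul_one mul_one_right mul_in W_def mul_ac)
  finally have nup_eq: "nup = mul D Wp + mul Dp W" by simp
  have Zp_eq: "Dp + nup = mul Dp (one + W) + mul D Wp"
    using DpE by (simp add: nup_eq mul_add_right mul_one_right)
  have "mul (mul Dinv P) (Dp + nup) = mul (mul Dinv Dp) (mul (one + W) P) + mul (mul D Dinv) (mul P Wp)"
    unfolding Zp_eq by (simp add: mul_add_right mul_ac)
  also have "\<dots> = mul Dinv Dp + mul P Wp"
    using oWP DDi by (simp add: mul_one_right mul_one mul_in)
  also have "mul P Wp = mul (pw W 0) Wp - mul (pw W 1) Wp + mul (pw W 2) Wp - mul (pw W 3) Wp + mul (pw W 4) Wp"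
    unfolding P_def using WE by (simp add: mul_add_left mul_diff_left mul_one_right)
  finally show "mul (ainv m n Ups u (D + nu)) (Dp + nup) = mul Dinv Dp +
           (mul (pw W 0) Wp - mul (pw W 1) Wp + mul (pw W 2) Wp - mul (pw W 3) Wp + mul (pw W 4) Wp)"
    unfolding A .
qed


definition hasd :: "(real \<Rightarrow> nat \<Rightarrow> complex) \<Rightarrow> (nat \<Rightarrow> complex) \<Rightarrow> real \<Rightarrow> bool" where
  "hasd X X' t \<longleftrightarrow> (\<forall>k. ((\<lambda>s. X s k) has_vector_derivative X' k) (at t))"

lemma hasd_const: "hasd (\<lambda>s. c) 0 t"
  by (simp add: hasd_def)

lemma hasd_mul:
  assumes X: "hasd X X' t" and Y: "hasd Y Y' t"
  shows "hasd (\<lambda>s. mul (X s) (Y s)) (mul X' (Y t) + mul (X t) Y') t"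
  unfolding hasd_def
proof
  fix k
  show "((\<lambda>s. mul (X s) (Y s) k) has_vector_derivative (mul X' (Y t) + mul (X t) Y') k) (at t)"
  proof (cases "k \<in> {1..n}")
    case False
    then show ?thesis by (simp add: mul_out)
  next
    case k: True
    let ?I = "{1..n}"
    have "((\<lambda>s. \<Sum>r\<in>?I. \<Sum>q\<in>?I. X s r * Y s q * T r q k) has_vector_derivative
          (\<Sum>r\<in>?I. \<Sum>q\<in>?I. (X t r * Y' q + X' r * Y t q) * T r q k)) (at t)"
      using X Y unfolding hasd_def
      by (intro has_vector_derivative_sum has_vector_derivative_mult_left has_vector_derivative_mult) auto
    moreover have "(\<Sum>r\<in>?I. \<Sum>q\<in>?I. (X t r * Y' q + X' r * Y t q) * T r q k) = (mul X' (Y t) + mul (X t) Y') k"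
      using k by (simp add: mul_eq algebra_simps sum.distrib)
    moreover have "(\<lambda>s. mul (X s) (Y s) k) = (\<lambda>s. \<Sum>r\<in>?I. \<Sum>q\<in>?I. X s r * Y s q * T r q k)"
      using k by (simp add: mul_eq)
    ultimately show ?thesis by simp
  qed
qed

lemma hasd_pw:
  assumes X: "hasd X X' t" and X'E: "X' \<in> E"
  shows "hasd (\<lambda>s. pw (X s) (Suc j)) (sc (of_nat (Suc j)) (mul (pw (X t) j) X')) t"
proof (induction j)
  case 0
  have "hasd (\<lambda>s. mul (X s) one) (mul X' one + mul (X t) 0) t"
    by (rule hasd_mul[OF X hasd_const])
  then show ?case using X'E by (simp add: mul_one_right mul_zero_right mul_one sc_def)
next
  case (Suc j)
  have "hasd (\<lambda>s. mul (X s) (pw (X s) (Suc j)))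
          (mul X' (pw (X t) (Suc j)) + mul (X t) (sc (of_nat (Suc j)) (mul (pw (X t) j) X'))) t"
    by (rule hasd_mul[OF X Suc])
  moreover have "mul X' (pw (X t) (Suc j)) + mul (X t) (sc (of_nat (Suc j)) (mul (pw (X t) j) X'))
      = sc (of_nat (Suc (Suc j))) (mul (pw (X t) (Suc j)) X')"
  proof -
    have "mul (X t) (mul (pw (X t) j) X') = mul (pw (X t) (Suc j)) X'" by (simp add: mul_ac)
    then show ?thesis by (simp only: mul_sc_right) (simp add: sc_def mul_comm[of X'] fun_eq_iff algebra_simps)
  qed
  ultimately show ?case by simp
qed


definition ct :: "(real \<Rightarrow> nat \<Rightarrow> complex) \<Rightarrow> real \<Rightarrow> bool" where
  "ct X t \<longleftrightarrow> (\<forall>k. isCont (\<lambda>s. X s k) t)"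

lemma hasd_ct: "hasd X X' t \<Longrightarrow> ct X t"
  unfolding hasd_def ct_def using has_vector_derivative_continuous by blast

lemma ct_const: "ct (\<lambda>s. c) t"
  by (simp add: ct_def)

lemma ct_add: "ct X t \<Longrightarrow> ct Y t \<Longrightarrow> ct (\<lambda>s. X s + Y s) t"
  by (simp add: ct_def continuous_intros)

lemma ct_diff: "ct X t \<Longrightarrow> ct Y t \<Longrightarrow> ct (\<lambda>s. X s - Y s) t"
  by (simp add: ct_def continuous_intros)

lemma ct_mul: assumes X: "ct X t" and Y: "ct Y t" shows "ct (\<lambda>s. mul (X s) (Y s)) t"
  unfolding ct_def
proof
  fix k
  show "isCont (\<lambda>s. mul (X s) (Y s) k) t"
  proof (cases "k \<in> {1..n}")
    case False then show ?thesis by (simp add: mul_out)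
  next
    case True
    then have "(\<lambda>s. mul (X s) (Y s) k) = (\<lambda>s. \<Sum>r\<in>{1..n}. \<Sum>q\<in>{1..n}. X s r * Y s q * T r q k)"
      by (simp add: mul_eq)
    moreover have "isCont (\<lambda>s. \<Sum>r\<in>{1..n}. \<Sum>q\<in>{1..n}. X s r * Y s q * T r q k) t"
      using X Y unfolding ct_def by (intro continuous_intros) auto
    ultimately show ?thesis by simp
  qed
qed

lemma ct_pw: "ct X t \<Longrightarrow> ct (\<lambda>s. pw (X s) j) t"
  by (induction j) (simp_all add: ct_const ct_mul)

lemma integral_mul:
  assumes f: "\<And>r. r \<in> {1..n} \<Longrightarrow> (\<lambda>t. f t r) integrable_on S"
  shows "(\<lambda>t. mul y (f t) k) integrable_on S"
    and "integral S (\<lambda>t. mul y (f t) k) = mul y (\<lambda>r. if r \<in> {1..n} then integral S (\<lambda>t. f t r) else 0) k"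
proof -
  let ?I = "{1..n}"
  have int1: "\<And>r q. r \<in> ?I \<Longrightarrow> q \<in> ?I \<Longrightarrow> (\<lambda>t. y r * f t q * T r q k) integrable_on S"
  proof -
    fix r q assume "r \<in> ?I" "q \<in> ?I"
    then have "(\<lambda>t. f t q) integrable_on S" using f by blast
    then have "(\<lambda>t. y r * (f t q * T r q k)) integrable_on S"
      by (intro integrable_on_mult_right integrable_on_mult_left)
    then show "(\<lambda>t. y r * f t q * T r q k) integrable_on S" by (simp add: mult.assoc)
  qed
  have int2: "\<And>r. r \<in> ?I \<Longrightarrow> (\<lambda>t. \<Sum>q\<in>?I. y r * f t q * T r q k) integrable_on S"
    using int1 by (rule_tac integrable_sum) auto
  have int3: "(\<lambda>t. \<Sum>r\<in>?I. \<Sum>q\<in>?I. y r * f t q * T r q k) integrable_on S"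
    using int2 by (rule_tac integrable_sum) auto
  show "(\<lambda>t. mul y (f t) k) integrable_on S"
  proof (cases "k \<in> ?I")
    case True then show ?thesis using int3 by (simp add: mul_eq)
  next
    case False then show ?thesis by (simp add: mul_out integrable_0)
  qed
  show "integral S (\<lambda>t. mul y (f t) k) = mul y (\<lambda>r. if r \<in> {1..n} then integral S (\<lambda>t. f t r) else 0) k"
  proof (cases "k \<in> ?I")
    case False then show ?thesis by (simp add: mul_out)
  next
    case k: True
    have "integral S (\<lambda>t. mul y (f t) k) = integral S (\<lambda>t. \<Sum>r\<in>?I. \<Sum>q\<in>?I. y r * f t q * T r q k)"
      using k by (simp add: mul_eq)
    also have "\<dots> = (\<Sum>r\<in>?I. integral S (\<lambda>t. \<Sum>q\<in>?I. y r * f t q * T r q k))"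
      using int2 by (rule_tac integral_sum) auto
    also have "\<dots> = (\<Sum>r\<in>?I. \<Sum>q\<in>?I. integral S (\<lambda>t. y r * f t q * T r q k))"
      using int1 by (intro sum.cong refl, rule_tac integral_sum) auto
    also have "\<dots> = (\<Sum>r\<in>?I. \<Sum>q\<in>?I. y r * integral S (\<lambda>t. f t q) * T r q k)"
      by (intro sum.cong refl) (simp add: integral_mult_right integral_mult_left mult.assoc)
    also have "\<dots> = mul y (\<lambda>r. if r \<in> {1..n} then integral S (\<lambda>t. f t r) else 0) k"
      using k unfolding mul_eq[of y] by (simp only: if_True) (intro sum.cong refl, auto)
    finally show ?thesis .
  qed
qed

end


definition circd :: "real \<Rightarrow> real^3 \<Rightarrow> real^3 \<Rightarrow> real \<Rightarrow> real^3" where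
  "circd R p q t = (2*pi*R) *\<^sub>R (cos (2*pi*t) *\<^sub>R q - sin (2*pi*t) *\<^sub>R p)"

lemma circ_deriv: "(circ R p q has_vector_derivative circd R p q t) (at t)"
  unfolding circ_def[abs_def] circd_def
  by (rule derivative_eq_intros refl | simp)+ (simp add: algebra_simps scaleR_diff_right)

lemma circd_cont: "continuous_on S (\<lambda>t. circd R p q t $ j)"
  unfolding circd_def by (intro continuous_intros)

lemma circ_comp_deriv: "((\<lambda>s. circ R p q s $ j) has_real_derivative (circd R p q t $ j)) (at t)"
  unfolding has_real_derivative_iff_has_vector_derivative
  by (rule bounded_linear.has_vector_derivative[OF bounded_linear_vec_nth circ_deriv])

lemma circ_half: "circ R p q (t + 1/2) = - circ R p q t"
proof -
  have e: "2*pi*(t+1/2) = 2*pi*t + pi" by (simp add: algebra_simps)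
  show ?thesis unfolding circ_def e by (simp add: algebra_simps)
qed

lemma circ_01: "circ R p q 1 = circ R p q 0"
  by (simp add: circ_def)

lemma zeta_neg: "zeta m A B (- P) = (\<lambda>k. - zeta m A B P k)"
  by (simp add: zeta_def fun_eq_iff algebra_simps)

definition zd :: "nat \<Rightarrow> (nat \<Rightarrow> complex) \<Rightarrow> (nat \<Rightarrow> complex) \<Rightarrow> real \<Rightarrow> real^3 \<Rightarrow> real^3 \<Rightarrow> real \<Rightarrow> nat \<Rightarrow> complex" where
  "zd m A B R p q t = (\<lambda>k. of_real (circd R p q t $ 1) * aone m k + of_real (circd R p q t $ 2) * A k + of_real (circd R p q t $ 3) * B k)"

lemma zeta_deriv: "((\<lambda>s. zeta m A B (circ R p q s) k) has_vector_derivative zd m A B R p q t k) (at t)"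
  unfolding zeta_def zd_def
  by (intro has_vector_derivative_add has_vector_derivative_mult_left has_vector_derivative_of_real circ_comp_deriv)

lemma zd_cont: "continuous_on S (\<lambda>t. zd m A B R p q t k)"
  unfolding zd_def by (intro continuous_intros circd_cont continuous_on_of_real)



theorem theorem8:
  fixes m n :: nat and Ups :: "nat \<Rightarrow> nat \<Rightarrow> nat \<Rightarrow> complex" and u :: "nat \<Rightarrow> nat"
    and a b :: "nat \<Rightarrow> complex" and R :: real and p q :: "real^3"
  assumes alg: "is_algebra_Anm m n Ups u"
    and dimN: "n - m = 4"
    and h1: "Ups (m+1) (m+1) (m+2) * Ups (m+2) (m+2) (m+3) = 0"
    and h2: "Ups (m+1) (m+1) (m+2) * Ups (m+2) (m+2) (m+4) = 0"
    and h3: "Ups (m+1) (m+1) (m+3) * Ups (m+2) (m+3) (m+4) = 0"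
    and h4: "Ups (m+3) (m+3) (m+4) * Ups (m+1) (m+1) (m+3) = 0"
    and h5: "Ups (m+1) (m+2) (m+3) * Ups (m+1) (m+3) (m+4) = 0"
    and h6: "Ups (m+1) (m+2) (m+3) * Ups (m+2) (m+3) (m+4) = 0"
    and h7: "Ups (m+1) (m+2) (m+3) * Ups (m+3) (m+3) (m+4) = 0"
    and h8: "Ups (m+1) (m+1) (m+2) * Ups (m+1) (m+2) (m+3) * Ups (m+2) (m+3) (m+4) = 0"
    and h9: "Ups (m+1) (m+1) (m+2) * Ups (m+1) (m+2) (m+3) * Ups (m+3) (m+3) (m+4) = 0"
    and h10: "Ups (m+2) (m+2) (m+3) * Ups (m+1) (m+3) (m+4) = 0"
    and h11: "Ups (m+2) (m+2) (m+3) * Ups (m+3) (m+3) (m+4) = 0"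
    and h12: "Ups (m+2) (m+2) (m+3) * Ups (m+1) (m+1) (m+2) * Ups (m+1) (m+3) (m+4) = 0"
    and h13: "Ups (m+2) (m+2) (m+3) * Ups (m+1) (m+1) (m+2) * Ups (m+2) (m+3) (m+4) = 0"
    and h14: "Ups (m+2) (m+2) (m+3) * Ups (m+1) (m+1) (m+2) * Ups (m+3) (m+3) (m+4) = 0"
    and indep: "\<forall>\<alpha> \<beta> \<gamma> :: real.
        (\<forall>k. of_real \<alpha> * aone m k + of_real \<beta> * coeffs_el n a k + of_real \<gamma> * coeffs_el n b k = 0)
        \<longrightarrow> \<alpha> = 0 \<and> \<beta> = 0 \<and> \<gamma> = 0"
    and surj_fu: "\<forall>v\<in>{1..m}. \<forall>w::complex. \<exists>x y z :: real.
        of_real x + of_real y * a v + of_real z * b v = w"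
    and R_pos: "R > 0"
    and pq: "norm p = 1" "norm q = 1" "inner p q = 0"
    and jordan: "\<forall>v\<in>{1..m}.
        simple_path (\<lambda>t. zeta m (coeffs_el n a) (coeffs_el n b) (circ R p q t) v) \<and>
        winding_number (\<lambda>t. zeta m (coeffs_el n a) (coeffs_el n b) (circ R p q t) v) 0 = 1"
  shows "alg_int m n Ups u (coeffs_el n a) (coeffs_el n b) (circ R p q)
           (\<lambda>P. ainv m n Ups u (zeta m (coeffs_el n a) (coeffs_el n b) P))
         = (\<lambda>k. 2 * of_real pi * \<i> * aone m k)"
proof -
  interpret AA m n Ups u by unfold_locales (rule alg)
  have n4: "n = m + 4" using dimN m_le by arith
  define A where "A = coeffs_el n a"
  define B where "B = coeffs_el n b"
  define \<gamma> where "\<gamma> = circ R p q"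
  define Z where "Z = (\<lambda>s. zeta m A B (\<gamma> s))"
  define Z' where "Z' = zd m A B R p q"
  have Zd: "\<And>t k. ((\<lambda>s. Z s k) has_vector_derivative Z' t k) (at t)"
    unfolding Z_def Z'_def \<gamma>_def by (rule zeta_deriv)
  have AE: "A \<in> E" and BE: "B \<in> E" unfolding A_def B_def by (auto simp: E_iff coeffs_el_def)
  have ZE: "\<And>s. Z s \<in> E"
    using AE BE one_in unfolding Z_def zeta_def E_iff by auto
  have Z'E: "\<And>t. Z' t \<in> E"
    using AE BE one_in unfolding Z'_def zd_def E_iff by auto
  have Z0: "\<And>s. Z s 0 = 0" using ZE unfolding E_iff by auto
  have Z'0: "\<And>s. Z' s 0 = 0" using Z'E unfolding E_iff by auto
  have Zhalf: "\<And>s k. Z (s + 1/2) k = - Z s k"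
    unfolding Z_def \<gamma>_def by (simp add: circ_half zeta_neg)
  have Znz: "Z t k \<noteq> 0" if t: "t \<in> {0..1}" and k: "k \<in> {1..m}" for t k
  proof
    assume z: "Z t k = 0"
    have sp: "simple_path (\<lambda>t. Z t k)"
      using jordan k unfolding Z_def A_def B_def \<gamma>_def by blast
    define t' where "t' = (if t \<le> 1/2 then t + 1/2 else t - 1/2)"
    have t': "t' \<in> {0..1}" using t unfolding t'_def by auto
    have z': "Z t' k = 0"
    proof (cases "t \<le> 1/2")
      case True then show ?thesis using z Zhalf[of t k] unfolding t'_def by simp
    next
      case False
      have "Z t k = - Z (t - 1/2) k" using Zhalf[of "t - 1/2" k] by simp
      then show ?thesis using z False unfolding t'_def by simp
    qed
    have "t = t' \<or> t = 0 \<and> t' = 1 \<or> t = 1 \<and> t' = 0"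
      using sp t t' z z' unfolding simple_path_def loop_free_def by metis
    then show False unfolding t'_def by (auto split: if_splits)
  qed
  define Dv where "Dv = (\<lambda>s k. if k \<le> m then Z s k else 0)"
  define nu where "nu = (\<lambda>s k. if m < k then Z s k else 0)"
  define Dp where "Dp = (\<lambda>s k. if k \<le> m then Z' s k else 0)"
  define nup where "nup = (\<lambda>s k. if m < k then Z' s k else 0)"
  define Dinv where "Dinv = (\<lambda>s k. if k \<le> m then inverse (Z s k) else 0)"
  define Dinvp where "Dinvp = (\<lambda>s. - mul (mul (Dinv s) (Dinv s)) (Dp s))"
  define W where "W = (\<lambda>s. mul (Dinv s) (nu s))"
  define Wp where "Wp = (\<lambda>s. mul (Dinvp s) (nu s) + mul (Dinv s) (nup s))"
  have kpos: "\<And>s k. Z s k \<noteq> 0 \<Longrightarrow> 1 \<le> k" using Z0 by (metis One_nat_def Suc_leI neq0_conv)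
  have kpos': "\<And>s k. Z' s k \<noteq> 0 \<Longrightarrow> 1 \<le> k" using Z'0 by (metis One_nat_def Suc_leI neq0_conv)
  have Dv_S: "\<And>s. inS (Dv s)" unfolding Dv_def inS_def using kpos by auto
  have Dinv_S: "\<And>s. inS (Dinv s)" unfolding Dinv_def inS_def using kpos by auto
  have Dp_S: "\<And>s. inS (Dp s)" unfolding Dp_def inS_def using kpos' by auto
  have nu_N: "\<And>s. inN (Suc m) (nu s)" unfolding nu_def inN_def using ZE by (auto simp: E_iff)
  have nup_N: "\<And>s. inN (Suc m) (nup s)" unfolding nup_def inN_def using Z'E by (auto simp: E_iff)
  have Z_split: "\<And>s. Z s = Dv s + nu s" unfolding Dv_def nu_def by (auto simp: fun_eq_iff)
  have Z'_split: "\<And>s. Z' s = Dp s + nup s" unfolding Dp_def nup_def by (auto simp: fun_eq_iff)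
  have DDi: "mul (Dv t) (Dinv t) = one" if t: "t \<in> {0..1}" for t
  proof -
    have "mul (Dv t) (Dinv t) = (\<lambda>k. Dv t k * Dinv t k)" by (rule mul_SS[OF Dv_S Dinv_S])
    also have "\<dots> = one"
    proof
      fix k
      show "Dv t k * Dinv t k = one k"
      proof (cases "k = 0")
        case True then show ?thesis using Z0 by (simp add: Dv_def aone_def)
      next
        case False
        then show ?thesis using Znz[OF t, of k] by (auto simp: Dv_def Dinv_def aone_def)
      qed
    qed
    finally show ?thesis .
  qed
  have Dinvp_eq: "\<And>t. Dinvp t = (\<lambda>k. - (Dinv t k * Dinv t k * Dp t k))"
  proof -
    fix t
    have "mul (mul (Dinv t) (Dinv t)) (Dp t) = (\<lambda>k. mul (Dinv t) (Dinv t) k * Dp t k)"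
      by (rule mul_SS[OF inS_mulS[OF Dinv_S Dinv_S] Dp_S])
    then show "Dinvp t = (\<lambda>k. - (Dinv t k * Dinv t k * Dp t k))"
      unfolding Dinvp_def by (simp add: mul_SS[OF Dinv_S Dinv_S] fun_eq_iff)
  qed
  have hDinv: "hasd Dinv (Dinvp t) t" if t: "t \<in> {0..1}" for t
    unfolding hasd_def
  proof
    fix k
    show "((\<lambda>s. Dinv s k) has_vector_derivative Dinvp t k) (at t)"
    proof (cases "k \<in> {1..m}")
      case True
      have "((\<lambda>s. inverse (Z s k)) has_vector_derivative (Z' t k * - (inverse (Z t k) ^ Suc (Suc 0)))) (at t)"
        using field_vector_diff_chain_at[OF Zd DERIV_inverse[OF Znz[OF t True]]] by (simp add: o_def)
      then show ?thesis using True unfolding Dinvp_eq by (simp add: Dinv_def Dp_def algebra_simps power2_eq_square)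
    next
      case False
      then have "k = 0 \<or> m < k" by auto
      then have "(\<lambda>s. Dinv s k) = (\<lambda>s. 0)" and "Dinvp t k = 0"
        unfolding Dinvp_eq by (auto simp: Dinv_def Z0)
      then show ?thesis by simp
    qed
  qed
  have hnu: "hasd nu (nup t) t" for t
    unfolding hasd_def
  proof
    fix k
    show "((\<lambda>s. nu s k) has_vector_derivative nup t k) (at t)"
      by (cases "m < k") (simp_all add: nu_def nup_def Zd)
  qed
  have hW: "hasd W (Wp t) t" if t: "t \<in> {0..1}" for t
    unfolding W_def Wp_def by (rule hasd_mul[OF hDinv[OF t] hnu])
  have WpE: "\<And>t. Wp t \<in> E" unfolding Wp_def by (intro add_E mul_in)
  define P where "P = (\<lambda>t. one - W t + pw (W t) 2 - pw (W t) 3 + pw (W t) 4)"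
  define I where "I = (\<lambda>t. mul (ainv m n Ups u (Z t)) (Z' t))"
  have Y_eq: "ainv m n Ups u (Z t) = mul (Dinv t) (P t)" if t: "t \<in> {0..1}" for t
    using key_identity(1)[OF n4 Dv_S Dinv_S Dp_S nu_N nup_N DDi[OF t]]
    unfolding Z_split P_def W_def .
  have I_eq: "I t = mul (Dinv t) (Dp t) + (mul (pw (W t) 0) (Wp t) - mul (pw (W t) 1) (Wp t)
      + mul (pw (W t) 2) (Wp t) - mul (pw (W t) 3) (Wp t) + mul (pw (W t) 4) (Wp t))" if t: "t \<in> {0..1}" for t
    using key_identity(2)[OF n4 Dv_S Dinv_S Dp_S nu_N nup_N DDi[OF t]]
    unfolding I_def Z_split Z'_split W_def Wp_def Dinvp_def .
  have Z10: "Z 1 = Z 0" unfolding Z_def \<gamma>_def by (simp add: circ_01)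
  have W10: "W 1 = W 0" unfolding W_def Dinv_def nu_def Z10 ..
  have intW: "((\<lambda>t. mul (pw (W t) j) (Wp t) k) has_integral 0) {0..1}" for j k
  proof -
    have "((\<lambda>t. sc (of_nat (Suc j)) (mul (pw (W t) j) (Wp t)) k) has_integral
            (pw (W 1) (Suc j) k - pw (W 0) (Suc j) k)) {0..1}"
    proof (rule fundamental_theorem_of_calculus)
      fix t :: real assume t: "t \<in> {0..1}"
      show "((\<lambda>s. pw (W s) (Suc j) k) has_vector_derivative sc (of_nat (Suc j)) (mul (pw (W t) j) (Wp t)) k) (at t within {0..1})"
        using hasd_pw[OF hW[OF t] WpE] unfolding hasd_def by (blast intro: has_vector_derivative_at_within)
    qed simp
    then have "((\<lambda>t. of_nat (Suc j) * mul (pw (W t) j) (Wp t) k) has_integral 0) {0..1}"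
      unfolding W10 sc_def by simp
    from has_integral_mult_right[OF this, of "inverse (of_nat (Suc j))"]
    have "((\<lambda>t. (inverse (of_nat (Suc j)) * of_nat (Suc j)) * mul (pw (W t) j) (Wp t) k) has_integral 0) {0..1}"
      by (simp only: mult.assoc mult_zero_right)
    moreover have "inverse (of_nat (Suc j)) * of_nat (Suc j) = (1::complex)"
      by (rule left_inverse) (simp only: of_nat_eq_0_iff nat.simps(3) not_False_eq_True)
    ultimately show ?thesis by simp
  qed
  have DDp: "\<And>t. mul (Dinv t) (Dp t) = (\<lambda>k. Dinv t k * Dp t k)" by (rule mul_SS[OF Dinv_S Dp_S])
  have intD: "((\<lambda>t. mul (Dinv t) (Dp t) k) has_integral (2 * of_real pi * \<i> * one k)) {0..1}" for k
  proof (cases "k \<in> {1..m}")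
    case k: True
    define g where "g = (\<lambda>t. Z t k)"
    have gd: "\<And>t. (g has_vector_derivative Z' t k) (at t)" unfolding g_def by (rule Zd)
    have vp: "valid_path g"
      unfolding valid_path_def
    proof (rule C1_differentiable_imp_piecewise)
      have "continuous_on {0..1} (\<lambda>x. Z' x k)" unfolding Z'_def by (rule zd_cont)
      moreover have "\<And>x. vector_derivative g (at x) = Z' x k" by (rule vector_derivative_at[OF gd])
      ultimately show "g C1_differentiable_on {0..1}"
        unfolding C1_differentiable_on_eq using differentiableI_vector[OF gd] by auto
    qed
    have nz: "0 \<notin> path_image g" unfolding path_image_def g_def using Znz k by auto
    have wn: "winding_number g 0 = 1" using jordan k unfolding g_def Z_def A_def B_def \<gamma>_def by blast
    have "((\<lambda>w. 1/(w - 0)) has_contour_integral (2*pi*\<i>*winding_number g 0)) g"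
      by (rule has_contour_integral_winding_number[OF vp nz])
    then have hi: "((\<lambda>x. 1/(g x - 0) * vector_derivative g (at x within {0..1})) has_integral (2*pi*\<i>)) {0..1}"
      unfolding has_contour_integral_def wn by simp
    have eqs: "\<And>x. x \<in> {0..1} \<Longrightarrow> 1/(g x - 0) * vector_derivative g (at x within {0..1}) = mul (Dinv x) (Dp x) k"
    proof -
      fix x :: real assume x: "x \<in> {0..1}"
      have "vector_derivative g (at x within {0..1}) = Z' x k"
        by (rule vector_derivative_within_closed_interval) (use x has_vector_derivative_at_within[OF gd] in auto)
      then show "1/(g x - 0) * vector_derivative g (at x within {0..1}) = mul (Dinv x) (Dp x) k"
        using k unfolding DDp by (simp add: g_def Dinv_def Dp_def divide_inverse)
    qed
    have "((\<lambda>t. mul (Dinv t) (Dp t) k) has_integral (2*pi*\<i>)) {0..1}"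
      by (rule has_integral_eq[OF eqs hi])
    moreover have "one k = 1" using k by (simp add: aone_def)
    ultimately show ?thesis by simp
  next
    case False
    then have "\<And>t. mul (Dinv t) (Dp t) k = 0" unfolding DDp using Z0 by (auto simp: Dinv_def not_less_eq_eq)
    then show ?thesis using False by (simp add: aone_def)
  qed
  have intI: "((\<lambda>t. I t k) has_integral (2 * of_real pi * \<i> * one k)) {0..1}" for k
  proof -
    have h0: "((\<lambda>t. mul (pw (W t) 0) (Wp t) k - mul (pw (W t) 1) (Wp t) k
      + mul (pw (W t) 2) (Wp t) k - mul (pw (W t) 3) (Wp t) k + mul (pw (W t) 4) (Wp t) k)
      has_integral (0 - 0 + 0 - 0 + 0)) {0..1}"
      by (intro has_integral_add has_integral_diff intW)
    have h1: "((\<lambda>t. mul (Dinv t) (Dp t) k + (mul (pw (W t) 0) (Wp t) k - mul (pw (W t) 1) (Wp t) k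
      + mul (pw (W t) 2) (Wp t) k - mul (pw (W t) 3) (Wp t) k + mul (pw (W t) 4) (Wp t) k))
      has_integral (2 * of_real pi * \<i> * one k + (0 - 0 + 0 - 0 + 0))) {0..1}"
      by (rule has_integral_add[OF intD h0])
    have h2: "\<And>t. t \<in> {0..1} \<Longrightarrow> mul (Dinv t) (Dp t) k + (mul (pw (W t) 0) (Wp t) k - mul (pw (W t) 1) (Wp t) k
      + mul (pw (W t) 2) (Wp t) k - mul (pw (W t) 3) (Wp t) k + mul (pw (W t) 4) (Wp t) k) = I t k"
      by (simp add: I_eq)
    from has_integral_eq[OF h2 h1] show ?thesis by simp
  qed
  define Y where "Y = (\<lambda>t. ainv m n Ups u (Z t))"
  define c where "c = (\<lambda>j t. complex_of_real (circd R p q t $ j))"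
  define f where "f = (\<lambda>j t r. Y t r * c j t)"
  have ctY: "ct (\<lambda>s. mul (Dinv s) (P s)) t" if t: "t \<in> {0..1}" for t
  proof -
    have cD: "ct Dinv t" by (rule hasd_ct[OF hDinv[OF t]])
    have cW: "ct W t" unfolding W_def by (rule ct_mul[OF cD hasd_ct[OF hnu]])
    have "ct P t" unfolding P_def by (intro ct_add ct_diff ct_const ct_pw cW)
    then show ?thesis by (rule ct_mul[OF cD])
  qed
  have f_int: "(\<lambda>t. f j t r) integrable_on {0..1}" for j r
  proof (rule integrable_continuous_interval)
    have "continuous_on {0..1} (\<lambda>t. mul (Dinv t) (P t) r * c j t)"
      unfolding c_def
      by (intro continuous_on_mult continuous_on_of_real circd_cont continuous_at_imp_continuous_on)
         (use ctY in \<open>auto simp: ct_def\<close>)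
    then show "continuous_on {0..1} (\<lambda>t. f j t r)"
      by (rule continuous_on_eq) (simp add: f_def Y_def Y_eq)
  qed
  define V where "V = (\<lambda>j k. if k \<in> {1..n} then integral {0..1} (\<lambda>t. f j t k) else 0)"
  have vd: "\<And>t. vector_derivative \<gamma> (at t) = circd R p q t"
    unfolding \<gamma>_def by (rule vector_derivative_at[OF circ_deriv])
  have alg_unf: "alg_int m n Ups u A B \<gamma> (\<lambda>P. ainv m n Ups u (zeta m A B P))
      = (\<lambda>k. V 1 k + mul A (V 2) k + mul B (V 3) k)"
    unfolding alg_int_def Let_def coord_int_def V_def f_def Y_def Z_def c_def vd ..
  have YE: "Y t \<in> E" if t: "t \<in> {0..1}" for t
    unfolding Y_def Y_eq[OF t] by (rule mul_in)
  have I_split: "I t k = (if k \<in> {1..n} then f 1 t k else 0) + mul A (f 2 t) k + mul B (f 3 t) k"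
    if t: "t \<in> {0..1}" for t k
  proof -
    have Z'e: "Z' t = sc (c 1 t) one + sc (c 2 t) A + sc (c 3 t) B"
      unfolding Z'_def zd_def c_def sc_def by (simp add: fun_eq_iff)
    have "I t = sc (c 1 t) (Y t) + sc (c 2 t) (mul (Y t) A) + sc (c 3 t) (mul (Y t) B)"
    proof -
      have Yt: "ainv m n Ups u (Z t) = Y t" by (simp add: Y_def)
      show ?thesis unfolding I_def Z'e Yt
        by (simp only: mul_add_right mul_sc_right mul_one_right[OF YE[OF t]])
    qed
    moreover have feq: "\<And>j. f j t = sc (c j t) (Y t)" unfolding f_def sc_def by (simp add: fun_eq_iff mult.commute)
    moreover have "mul A (f 2 t) = sc (c 2 t) (mul (Y t) A)"
      by (simp only: feq mul_sc_right mul_comm[of A])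
    moreover have "mul B (f 3 t) = sc (c 3 t) (mul (Y t) B)"
      by (simp only: feq mul_sc_right mul_comm[of B])
    moreover have "Y t k = 0" if "k \<notin> {1..n}" using YE[OF t] that unfolding E_iff by blast
    ultimately show ?thesis
      by (simp add: sc_def)
  qed
  have if_int: "(\<lambda>t. if k \<in> {1..n} then f 1 t k else 0) integrable_on {0..1}" for k
    by (cases "k \<in> {1..n}") (simp_all only: if_True if_False f_int integrable_0)
  have final: "alg_int m n Ups u A B \<gamma> (\<lambda>P. ainv m n Ups u (zeta m A B P)) k = 2 * of_real pi * \<i> * one k" for k
  proof -
    have "integral {0..1} (\<lambda>t. I t k) = integral {0..1} (\<lambda>t. (if k \<in> {1..n} then f 1 t k else 0) + mul A (f 2 t) k + mul B (f 3 t) k)"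
      by (rule integral_cong) (rule I_split)
    also have "\<dots> = integral {0..1} (\<lambda>t. if k \<in> {1..n} then f 1 t k else 0) + integral {0..1} (\<lambda>t. mul A (f 2 t) k)
        + integral {0..1} (\<lambda>t. mul B (f 3 t) k)"
      using if_int integral_mul(1)[OF f_int] by (simp add: integral_add integrable_add)
    also have "\<dots> = V 1 k + mul A (V 2) k + mul B (V 3) k"
      unfolding V_def integral_mul(2)[OF f_int]
      by (cases "k \<in> {1..n}") (simp_all only: if_True if_False integral_0)
    finally have "alg_int m n Ups u A B \<gamma> (\<lambda>P. ainv m n Ups u (zeta m A B P)) k = integral {0..1} (\<lambda>t. I t k)"
      unfolding alg_unf by simp
    also have "\<dots> = 2 * of_real pi * \<i> * one k" by (rule integral_unique[OF intI])
    finally show ?thesis .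
  qed
  show ?thesis using final unfolding A_def B_def \<gamma>_def by (simp add: fun_eq_iff)
qed

end
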